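(* Let $n\ge 3$ and $\Delta,\Delta'\in\mathcal{P}_n$. If there exists $i\in\mathbb{Z}_n$ with $lab_\Delta((i,i-1))\neq lab_{\Delta'}((i,i-1))$, then $f^{(\Delta)}_{8,n}\neq f^{(\Delta')}_{8,n}$.
   Context: Cells are indexed by $\mathbb{Z}_n=\{0,\dots,n-1\}$, indices modulo $n$. Rule $8$ has local rule $r_8(x_1,x_2,x_3)=\neg x_1\wedge x_2\wedge x_3$ and global function $f_{8,n}(x)_i=r_8(x_{i-1},x_i,x_{i+1})$. An update schedule is an ordered partition $\Delta=(\Delta_1,\dots,\Delta_k)$ of $\mathbb{Z}_n$ into nonempty blocks; $\mathcal{P}_n$ is the set of them. For a block $B$ let $f^{(B)}(x)_i=f_{8,n}(x)_i$ if $i\in B$ and $x_i$ otherwise; $f^{(\Delta)}_{8,n}=f^{(\Delta_k)}\circ\cdots\circ f^{(\Delta_1)}$. (The paper states the conclusion as inequality of the transition digraphs with arcs $(x,f^{(\Delta)}_{8,n}(x))$, equivalent to inequality of the maps.) For $u,v\in\mathbb{Z}_n$ with $u\in\Delta_a$, $v\in\Delta_b$, $lab_\Delta((u,v))=\oplus$ if $b\le a$ and $\ominus$ if $a<b$. *)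

theory Defs
  imports Main
begin

text \<open>Cells are 0..n-1; a configuration is x :: nat \<Rightarrow> bool, only values at i < n matter.\<close>

definition config :: "nat \<Rightarrow> (nat \<Rightarrow> bool) set" where
  "config n = {x. \<forall>i\<ge>n. \<not> x i}"

definition r8 :: "bool \<Rightarrow> bool \<Rightarrow> bool \<Rightarrow> bool" where
  "r8 x1 x2 x3 = (\<not> x1 \<and> x2 \<and> x3)"

definition f8 :: "nat \<Rightarrow> (nat \<Rightarrow> bool) \<Rightarrow> (nat \<Rightarrow> bool)" where
  "f8 n x = (\<lambda>i. if i < n then r8 (x ((i + n - 1) mod n)) (x i) (x ((i + 1) mod n)) else x i)"

definition block_update :: "nat \<Rightarrow> nat set \<Rightarrow> (nat \<Rightarrow> bool) \<Rightarrow> (nat \<Rightarrow> bool)" where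
  "block_update n B x = (\<lambda>i. if i \<in> B then f8 n x i else x i)"

text \<open>Ordered partition (\<Delta>_1,...,\<Delta>_k) as a list of blocks (list position 0 = \<Delta>_1).\<close>
definition update_schedule :: "nat \<Rightarrow> nat set list \<Rightarrow> bool" where
  "update_schedule n D \<longleftrightarrow>
     (\<forall>B\<in>set D. B \<noteq> {}) \<and>
     (\<forall>a<length D. \<forall>b<length D. a \<noteq> b \<longrightarrow> D ! a \<inter> D ! b = {}) \<and>
     \<Union> (set D) = {0..<n}"

text \<open>f^(\<Delta>) = f^(\<Delta>_k) o ... o f^(\<Delta>_1): apply blocks in list order.\<close>
definition sched_update :: "nat \<Rightarrow> nat set list \<Rightarrow> (nat \<Rightarrow> bool) \<Rightarrow> (nat \<Rightarrow> bool)" where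
  "sched_update n D x = fold (block_update n) D x"

definition block_idx :: "nat set list \<Rightarrow> nat \<Rightarrow> nat" where
  "block_idx D u = (THE a. a < length D \<and> u \<in> D ! a)"

text \<open>lab((u,v)) = True for \<oplus> (b \<le> a), False for \<ominus> (a < b).\<close>
definition lab :: "nat set list \<Rightarrow> nat \<Rightarrow> nat \<Rightarrow> bool" where
  "lab D u v \<longleftrightarrow> block_idx D v \<le> block_idx D u"

end

theory Submission
  imports Defs
begin

lemma fold_out: "j \<notin> \<Union>(set D) \<Longrightarrow> fold (block_update n) D x j = x j"
  by (induction D arbitrary: x) (auto simp: block_update_def)

lemma f8_le: "f8 n x j \<Longrightarrow> x j"
  by (auto simp: f8_def r8_def split: if_splits)

lemma fold_dec: "fold (block_update n) D x j \<Longrightarrow> x j"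
proof (induction D arbitrary: x)
  case (Cons B D)
  then have "block_update n B x j" by simp
  then show ?case by (auto simp: block_update_def dest: f8_le split: if_splits)
qed simp

lemma sched_props:
  assumes "update_schedule n D" "j < n"
  shows "block_idx D j < length D \<and> j \<in> D ! block_idx D j"
    and "\<And>c. c < length D \<Longrightarrow> j \<in> D ! c \<Longrightarrow> c = block_idx D j"
proof -
  have U: "\<Union> (set D) = {0..<n}" and
    disj: "\<forall>a<length D. \<forall>b<length D. a \<noteq> b \<longrightarrow> D ! a \<inter> D ! b = {}"
    using assms(1) unfolding update_schedule_def by simp_all
  have "j \<in> \<Union>(set D)" using U assms(2) by simp
  then obtain B where "B \<in> set D" "j \<in> B" by blast
  then obtain a where a: "a < length D" "j \<in> D ! a" by (metis in_set_conv_nth)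
  have u: "c = a" if "c < length D" "j \<in> D ! c" for c
  proof (rule ccontr)
    assume "c \<noteq> a"
    then have "D ! c \<inter> D ! a = {}" using disj that(1) a(1) by blast
    then show False using that(2) a(2) by blast
  qed
  have "block_idx D j = a" unfolding block_idx_def
  proof (rule the_equality)
    show "a < length D \<and> j \<in> D ! a" using a by simp
    show "\<And>c. c < length D \<and> j \<in> D ! c \<Longrightarrow> c = a" using u by blast
  qed
  then show "block_idx D j < length D \<and> j \<in> D ! block_idx D j"
    and "\<And>c. c < length D \<Longrightarrow> j \<in> D ! c \<Longrightarrow> c = block_idx D j"
    using a u by blast+
qed

lemma not_in_take:
  assumes "update_schedule n D" "j < n" "k \<le> block_idx D j"
  shows "j \<notin> \<Union>(set (take k D))"
proof
  assume "j \<in> \<Union>(set (take k D))"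
  then obtain c where "c < length (take k D)" "j \<in> take k D ! c" by (auto simp: in_set_conv_nth)
  then have "c < length D" "c < k" "j \<in> D ! c" by auto
  then have "c = block_idx D j" using sched_props(2)[OF assms(1,2)] by blast
  with \<open>c < k\<close> assms(3) show False by linarith
qed

lemma not_in_drop:
  assumes "update_schedule n D" "j < n"
  shows "j \<notin> \<Union>(set (drop (Suc (block_idx D j)) D))"
proof
  assume "j \<in> \<Union>(set (drop (Suc (block_idx D j)) D))"
  then obtain c where "c < length (drop (Suc (block_idx D j)) D)" "j \<in> drop (Suc (block_idx D j)) D ! c"
    by (auto simp: in_set_conv_nth)
  then have "Suc (block_idx D j) + c < length D" "j \<in> D ! (Suc (block_idx D j) + c)" by auto
  then have "Suc (block_idx D j) + c = block_idx D j" using sched_props(2)[OF assms(1,2)] by blast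
  then show False by linarith
qed

lemma fold_at:
  assumes "update_schedule n D" "j < n"
  shows "fold (block_update n) D x j = f8 n (fold (block_update n) (take (block_idx D j) D) x) j"
proof -
  define a where "a = block_idx D j"
  have a: "a < length D" "j \<in> D ! a" using sched_props(1)[OF assms] by (auto simp: a_def)
  have eq: "D = take a D @ (D ! a # drop (Suc a) D)"
    using a(1) by (simp only: Cons_nth_drop_Suc append_take_drop_id)
  have "fold (block_update n) D x = fold (block_update n) (take a D @ (D ! a # drop (Suc a) D)) x"
    using eq by (rule arg_cong)
  also have "\<dots> = fold (block_update n) (drop (Suc a) D)
     (block_update n (D ! a) (fold (block_update n) (take a D) x))"
    by simp
  finally have F: "fold (block_update n) D x = fold (block_update n) (drop (Suc a) D)
     (block_update n (D ! a) (fold (block_update n) (take a D) x))" .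
  have "j \<notin> \<Union>(set (drop (Suc a) D))" using not_in_drop[OF assms] by (simp add: a_def)
  then show ?thesis unfolding F a_def[symmetric] using fold_out a(2)
    by (simp add: block_update_def)
qed

lemma arith:
  fixes n i :: nat
  assumes "n \<ge> 3" "i < n"
  defines "p \<equiv> (i + n - 1) mod n"
  shows "p < n \<and> (p + 1) mod n = i \<and> (p + n - 1) mod n \<noteq> i \<and> (p + n - 1) mod n \<noteq> p \<and>
    (p + n - 1) mod n < n \<and> p \<noteq> i"
proof (cases "i = 0")
  case True
  then have pe: "p = n - 1" using assms by (simp add: p_def)
  have e1: "n - 1 + n - 1 = (n - 2) + n" using assms(1) by simp
  have "(n - 1 + n - 1) mod n = (n - 2 + n) mod n" by (simp only: e1)
  also have "\<dots> = n - 2" using assms(1) by (simp only: mod_add_self2) simp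
  finally have "(n - 1 + n - 1) mod n = n - 2" .
  then show ?thesis unfolding pe using assms(1,2) True by simp
next
  case False
  have e2: "i + n - 1 = (i - 1) + n" using False assms(1) by simp
  have "p = ((i - 1) + n) mod n" unfolding p_def by (simp only: e2)
  also have "\<dots> = i - 1" using assms(2) by (simp only: mod_add_self2) simp
  finally have pe: "p = i - 1" .
  show ?thesis
  proof (cases "i = 1")
    case True
    then have q: "(p + n - 1) mod n = n - 1" using assms(1,2) pe by simp
    then show ?thesis using assms(1,2) True q unfolding pe by simp
  next
    case i1: False
    have e3: "p + n - 1 = (i - 2) + n" using pe False i1 assms(1) by simp
    have "(p + n - 1) mod n = ((i - 2) + n) mod n" by (simp only: e3)
    also have "\<dots> = i - 2" using assms(2) by (simp only: mod_add_self2) simp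
    finally have q: "(p + n - 1) mod n = i - 2" .
    have "(i - 1 + 1) mod n = i" using False assms(2) by simp
    then show ?thesis using assms(1,2) False i1 q unfolding pe by (simp, arith)
  qed
qed

lemma key:
  fixes n i :: nat
  assumes n: "n \<ge> 3" and i: "i < n" and D: "update_schedule n D"
  defines "p \<equiv> (i + n - 1) mod n"
  defines "x \<equiv> (\<lambda>j. j < n \<and> (j = i \<or> j = p))"
  shows "sched_update n D x p = lab D i p"
proof -
  have ar: "p < n" "(p + 1) mod n = i" "(p + n - 1) mod n \<noteq> i" "(p + n - 1) mod n \<noteq> p" "(p + n - 1) mod n < n" "p \<noteq> i"
    using arith[OF n i] unfolding p_def by simp_all
  let ?q = "(p + n - 1) mod n"
  let ?a = "block_idx D p" and ?b = "block_idx D i"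
  define s where "s = fold (block_update n) (take ?a D) x"
  have fin: "sched_update n D x p = r8 (s ?q) (s p) (s i)"
    unfolding sched_update_def s_def fold_at[OF D ar(1)]
    using ar by (simp add: f8_def)
  have sq: "\<not> s ?q" using fold_dec[of n "take ?a D" x ?q] ar unfolding s_def x_def by auto
  have sp: "s p" unfolding s_def
    using fold_out[OF not_in_take[OF D ar(1) order_refl]] ar by (simp add: x_def)
  show ?thesis
  proof (cases "lab D i p")
    case True
    then have "?a \<le> ?b" by (simp add: lab_def)
    then have "s i" unfolding s_def
      using fold_out[OF not_in_take[OF D i]] ar i by (simp add: x_def)
    then show ?thesis using fin sq sp True by (simp add: r8_def)
  next
    case False
    then have ba: "?b < ?a" by (simp add: lab_def)
    have bl: "?b < length D" using sched_props(1)[OF D i] by simp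
    have tk: "take ?a D = take (Suc ?b) D @ drop (Suc ?b) (take ?a D)"
      using ba by (metis append_take_drop_id min.absorb1 Suc_leI take_take)
    define t where "t = fold (block_update n) (take (Suc ?b) D) x"
    have "s = fold (block_update n) (drop (Suc ?b) (take ?a D)) t"
      unfolding s_def t_def by (subst tk) simp
    then have si: "s i \<Longrightarrow> t i" using fold_dec by metis
    have "take (Suc ?b) D = take ?b D @ [D ! ?b]" using bl by (simp add: take_Suc_conv_app_nth)
    moreover have "i \<in> D ! ?b" using sched_props(1)[OF D i] by simp
    ultimately have "t i = f8 n (fold (block_update n) (take ?b D) x) i"
      unfolding t_def by (simp add: block_update_def)
    moreover have "fold (block_update n) (take ?b D) x p"
      using fold_out[OF not_in_take[OF D ar(1)], of ?b] ba ar by (simp add: x_def)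
    ultimately have "\<not> t i" using i ar by (simp add: f8_def r8_def p_def)
    then show ?thesis using fin si False by (auto simp: r8_def)
  qed
qed

theorem mainTheorem14:
  fixes n :: nat and D D' :: "nat set list"
  assumes "n \<ge> 3"
    and "update_schedule n D" and "update_schedule n D'"
    and "\<exists>i<n. lab D i ((i + n - 1) mod n) \<noteq> lab D' i ((i + n - 1) mod n)"
  shows "\<exists>x\<in>config n. sched_update n D x \<noteq> sched_update n D' x"
proof -
  obtain i where i: "i < n" "lab D i ((i + n - 1) mod n) \<noteq> lab D' i ((i + n - 1) mod n)"
    using assms(4) by blast
  let ?x = "\<lambda>j. j < n \<and> (j = i \<or> j = (i + n - 1) mod n)"
  have "?x \<in> config n" by (simp add: config_def)
  moreover have "sched_update n D ?x \<noteq> sched_update n D' ?x"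
    using key[OF assms(1) i(1) assms(2)] key[OF assms(1) i(1) assms(3)] i(2) by metis
  ultimately show ?thesis by blast
qed

end
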